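(* Let $h$ be a snowflaking function and let $(X,d)$ be a metric space. If the metric space $(X,h\circ d)$ admits an isometric embedding into some finite-dimensional normed linear (Banach) space, then $X$ is finite.
   Context: Let $\mathbb R_{\geq}=[0,\infty)$. A function $h:\mathbb R_{\geq}\to\mathbb R_{\geq}$ is called a snowflaking function if: (S1) $h(0)=0$; (S2) $h$ is concave; (S3) $h(t)/t\to\infty$ as $t\to0^+$; (S4) $h(t)/t\to 0$ as $t\to\infty$. For such $h$ and a metric $d$ on $X$, $h\circ d$ is again a metric on $X$; $(X,h\circ d)$ is called the $h$-snowflake of $(X,d)$. *)

theory Defs
  imports "HOL-Analysis.Analysis"
begin

text \<open>Snowflaking function h : [0,inf) -> [0,inf), represented as a real function
  whose values on [0,inf) are nonnegative; only its restriction to [0,inf) matters.\<close>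
definition snowflaking :: "(real \<Rightarrow> real) \<Rightarrow> bool" where
  "snowflaking h \<longleftrightarrow>
     (\<forall>t\<ge>0. h t \<ge> 0) \<and>
     h 0 = 0 \<and>
     concave_on {0..} h \<and>
     filterlim (\<lambda>t. h t / t) at_top (at_right 0) \<and>
     ((\<lambda>t. h t / t) \<longlongrightarrow> 0) at_top"

end

theory Submission
  imports Defs
begin


lemma concave3:
  fixes h :: "real \<Rightarrow> real"
  assumes c: "concave_on {0..} h" and "0 \<le> x" "x < y" "y < z"
  shows "(h z - h y) * (y - x) \<le> (h y - h x) * (z - y)"
proof -
  define t where "t = (y - x) / (z - x)"
  have t0: "t \<ge> 0" "t \<le> 1" using assms unfolding t_def by (auto simp: field_simps)
  have tz: "t * (z - x) = y - x" using assms unfolding t_def by simp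
  have "(1 - t) *\<^sub>R x + t *\<^sub>R z = x + t * (z - x)" by (simp add: algebra_simps)
  then have "(1 - t) *\<^sub>R x + t *\<^sub>R z = y" using tz by simp
  then have "h y \<ge> (1 - t) * h x + t * h z"
    using concave_onD[OF c, of t x z] t0 assms by auto
  moreover have "1 - t = (z - y) / (z - x)" using assms unfolding t_def by (simp add: field_simps)
  then have "(1 - t) * h x + t * h z = ((z - y) * h x + (y - x) * h z) / (z - x)"
    unfolding t_def by (simp add: add_divide_distrib)
  ultimately have "((z - y) * h x + (y - x) * h z) / (z - x) \<le> h y" by simp
  then have "(z - x) * h y \<ge> (z - y) * h x + (y - x) * h z"
    using assms by (simp add: pos_divide_le_eq mult.commute)
  then show ?thesis by (simp add: algebra_simps)
qed

lemma h_mono: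
  fixes h :: "real \<Rightarrow> real"
  assumes c: "concave_on {0..} h" and nn: "\<forall>t\<ge>0. h t \<ge> 0" and "0 \<le> x" "x \<le> y"
  shows "h x \<le> h y"
proof (rule ccontr)
  assume neg: "\<not> h x \<le> h y"
  then have xy: "x < y" using assms by (cases "x = y") auto
  define sig where "sig = (h x - h y) / (y - x)"
  have sig: "sig > 0" using neg xy unfolding sig_def by auto
  define z where "z = y + (h y + 1) / sig"
  have hy: "h y \<ge> 0" using nn assms by auto
  have yz: "y < z" unfolding z_def using sig hy by auto
  have "(h z - h y) * (y - x) \<le> (h y - h x) * (z - y)" using concave3[OF c assms(3) xy yz] .
  then have "h z - h y \<le> - sig * (z - y)" using xy unfolding sig_def by (simp add: field_simps)
  also have "- sig * (z - y) = - (h y + 1)" unfolding z_def using sig by simp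
  finally have "h z < 0" by simp
  moreover have "h z \<ge> 0" using nn yz assms by auto
  ultimately show False by simp
qed

lemma h_sub:
  fixes h :: "real \<Rightarrow> real"
  assumes c: "concave_on {0..} h" and h0: "h 0 = 0" and "0 < s" "0 \<le> t"
  shows "h (s + t) \<le> h s + t * (h s / s)"
proof (cases "t = 0")
  case False
  then have "(h (s+t) - h s) * (s - 0) \<le> (h s - h 0) * (s + t - s)"
    using concave3[OF c, of 0 s "s+t"] assms by auto
  then have "(h (s+t) - h s) * s \<le> h s * t" using h0 by simp
  then show ?thesis using assms by (simp add: field_simps)
qed simp

lemma g_anti:
  fixes h :: "real \<Rightarrow> real"
  assumes c: "concave_on {0..} h" and h0: "h 0 = 0" and "0 < x" "x \<le> y"
  shows "h y / y \<le> h x / x"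
proof -
  have "h (x + (y - x)) \<le> h x + (y - x) * (h x / x)" using h_sub[OF c h0, of x "y - x"] assms by auto
  moreover have "h x + (y - x) * (h x / x) = y * (h x / x)" using assms by (simp add: field_simps)
  ultimately have "h y \<le> y * (h x / x)" by simp
  then show ?thesis using assms by (simp add: field_simps)
qed



lemma bw_span:
  fixes B :: "'b::real_normed_vector set"
  assumes "finite B"
  shows "\<forall>x::nat\<Rightarrow>'b. (\<forall>n. x n \<in> span B) \<and> bounded (range x) \<longrightarrow>
           (\<exists>l\<in>span B. \<exists>r. strict_mono r \<and> (x \<circ> r) \<longlonglongrightarrow> l)"
  using assms
proof (induction B rule: finite_induct)
  case empty
  show ?case
  proof (intro allI impI)
    fix x :: "nat \<Rightarrow> 'b" assume "(\<forall>n. x n \<in> span {}) \<and> bounded (range x)"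
    then have "x = (\<lambda>n. 0)" by auto
    then have "strict_mono id \<and> (x \<circ> id) \<longlonglongrightarrow> 0" by (simp add: strict_mono_def)
    then show "\<exists>l\<in>span {}. \<exists>r. strict_mono r \<and> (x \<circ> r) \<longlonglongrightarrow> l"
      using span_zero by blast
  qed
next
  case (insert b B)
  note IH = insert.IH
  show ?case
  proof (cases "b \<in> span B")
    case True
    then show ?thesis using IH span_redundant[OF True] by simp
  next
    case nb: False
    have cl: "l \<in> span B" if w: "\<forall>n. w n \<in> span B" and wl: "w \<longlonglongrightarrow> l" for w l
    proof -
      have "bounded (range w)" using convergent_imp_bounded[OF wl] .
      then obtain l' r where l': "l' \<in> span B" "strict_mono r" "(w \<circ> r) \<longlonglongrightarrow> l'"
        using IH w by blast
      have "(w \<circ> r) \<longlonglongrightarrow> l" using LIMSEQ_subseq_LIMSEQ[OF wl l'(2)] .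
      then have "l = l'" using LIMSEQ_unique l'(3) by blast
      then show ?thesis using l' by simp
    qed
    obtain \<delta> where dpos: "\<delta> > 0" and dlow: "\<forall>w\<in>span B. \<delta> \<le> norm (b - w)"
    proof (rule ccontr)
      assume "\<not> thesis"
      then have "\<forall>\<delta>>0. \<exists>w\<in>span B. norm (b - w) < \<delta>"
        using that by (metis not_le)
      then have "\<forall>n::nat. \<exists>w\<in>span B. norm (b - w) < 1 / (real n + 1)" by simp
      then obtain w where w: "\<forall>n. w n \<in> span B \<and> norm (b - w n) < 1 / (real n + 1)"
        by metis
      have "w \<longlonglongrightarrow> b"
        unfolding lim_sequentially
      proof (intro allI impI)
        fix r :: real assume "r > 0"
        then obtain N :: nat where N: "inverse (real (Suc N)) < r" using reals_Archimedean by blast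
        show "\<exists>no. \<forall>n\<ge>no. dist (w n) b < r"
        proof (intro exI allI impI)
          fix n assume "n \<ge> N"
          then have "1 / (real n + 1) \<le> inverse (real (Suc N))"
            by (simp add: field_simps)
          then show "dist (w n) b < r" using w N by (simp add: dist_norm norm_minus_commute) (smt (verit))
        qed
      qed
      then have "b \<in> span B" using cl w by blast
      then show False using nb by simp
    qed
    show ?thesis
    proof (intro allI impI)
      fix x :: "nat \<Rightarrow> 'b"
      assume xa: "(\<forall>n. x n \<in> span (insert b B)) \<and> bounded (range x)"
      have "\<forall>n. \<exists>k. x n - k *\<^sub>R b \<in> span B" using xa span_insert[of b B] by auto
      then obtain c where c: "\<forall>n. x n - c n *\<^sub>R b \<in> span B" by metis
      obtain M where M: "\<forall>n. norm (x n) \<le> M" using xa unfolding bounded_iff by auto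
      have cb: "\<bar>c n\<bar> * \<delta> \<le> M" for n
      proof (cases "c n = 0")
        case True then show ?thesis using M norm_ge_zero[of "x n"] by (metis abs_zero mult_zero_left order_trans)
      next
        case False
        define w where "w = x n - c n *\<^sub>R b"
        have "- (1 / c n) *\<^sub>R w \<in> span B" using c unfolding w_def by (simp add: span_scale span_neg)
        then have "\<delta> \<le> norm (b - (- (1 / c n) *\<^sub>R w))" using dlow by blast
        also have "b - (- (1 / c n) *\<^sub>R w) = (1 / c n) *\<^sub>R x n"
          unfolding w_def using False by (simp add: algebra_simps)
        finally have "\<delta> \<le> norm (x n) / \<bar>c n\<bar>" by simp
        then have "\<bar>c n\<bar> * \<delta> \<le> norm (x n)" using False by (simp add: field_simps)
        then show ?thesis using M by (smt (verit))
      qed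
      have "bounded (range c)" unfolding bounded_iff
        using cb dpos by (auto intro!: exI[of _ "M / \<delta>"] simp: field_simps)
      then obtain c0 r1 where r1: "strict_mono r1" "(c \<circ> r1) \<longlonglongrightarrow> c0"
        using bounded_imp_convergent_subsequence by blast
      define w' where "w' n = x (r1 n) - c (r1 n) *\<^sub>R b" for n
      have w'sp: "\<forall>n. w' n \<in> span B" using c unfolding w'_def by simp
      have "norm (w' n) \<le> M + (M / \<delta>) * norm b" for n
      proof -
        have "norm (w' n) \<le> norm (x (r1 n)) + \<bar>c (r1 n)\<bar> * norm b"
          unfolding w'_def by (metis norm_scaleR norm_triangle_ineq4)
        moreover have "\<bar>c (r1 n)\<bar> \<le> M / \<delta>" using cb[of "r1 n"] dpos by (simp add: field_simps)
        ultimately show ?thesis using M by (smt (verit) mult_right_mono norm_ge_zero)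
      qed
      then have "bounded (range w')" unfolding bounded_iff by auto
      then obtain l0 r2 where r2: "l0 \<in> span B" "strict_mono r2" "(w' \<circ> r2) \<longlonglongrightarrow> l0"
        using IH w'sp by blast
      have c2: "(c \<circ> (r1 \<circ> r2)) \<longlonglongrightarrow> c0"
        using LIMSEQ_subseq_LIMSEQ[OF r1(2) r2(2)] by (simp add: o_assoc)
      have "(\<lambda>n. (w' \<circ> r2) n + (c \<circ> (r1 \<circ> r2)) n *\<^sub>R b) \<longlonglongrightarrow> l0 + c0 *\<^sub>R b"
        by (intro tendsto_add tendsto_scaleR r2(3) c2 tendsto_const)
      moreover have "(\<lambda>n. (w' \<circ> r2) n + (c \<circ> (r1 \<circ> r2)) n *\<^sub>R b) = x \<circ> (r1 \<circ> r2)"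
        unfolding w'_def by (auto simp: fun_eq_iff)
      ultimately have lim: "(x \<circ> (r1 \<circ> r2)) \<longlonglongrightarrow> l0 + c0 *\<^sub>R b" by simp
      have "l0 + c0 *\<^sub>R b \<in> span (insert b B)"
        using r2(1) by (meson insertI1 span_add span_base span_mono span_scale subset_insertI subsetD)
      then show "\<exists>l\<in>span (insert b B). \<exists>r. strict_mono r \<and> (x \<circ> r) \<longlonglongrightarrow> l"
        using lim strict_mono_o[OF r1(1) r2(2)] by blast
    qed
  qed
qed

lemma bw:
  fixes x :: "nat \<Rightarrow> 'b::real_normed_vector"
  assumes "\<exists>B::'b set. finite B \<and> span B = UNIV" "bounded (range x)"
  shows "\<exists>l r. strict_mono r \<and> (x \<circ> r) \<longlonglongrightarrow> l"
  using assms bw_span by blast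



lemma norm_sgn_scale: "norm w *\<^sub>R sgn w = (w::'b::real_normed_vector)"
  by (cases "w = 0") (simp_all add: sgn_div_norm)

lemma key_geom:
  fixes w1 w2 :: "'b::real_normed_vector"
  assumes "norm (sgn w2 - sgn w1) \<le> 1/2"
  shows "norm w1 + norm w2 / 2 \<le> norm (w1 + w2)"
proof (cases "w1 = 0")
  case True then show ?thesis by simp
next
  case False
  have e1: "w1 + norm w2 *\<^sub>R sgn w1 = (norm w1 + norm w2) *\<^sub>R sgn w1"
    using False by (simp add: sgn_div_norm algebra_simps)
  have eq: "w1 + w2 = (w1 + norm w2 *\<^sub>R sgn w1) + norm w2 *\<^sub>R (sgn w2 - sgn w1)"
  proof -
    have "(w1 + norm w2 *\<^sub>R sgn w1) + norm w2 *\<^sub>R (sgn w2 - sgn w1) = w1 + norm w2 *\<^sub>R sgn w2"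
      by (simp add: algebra_simps)
    then show ?thesis by (simp add: norm_sgn_scale)
  qed
  have "norm (w1 + w2) \<ge> norm (w1 + norm w2 *\<^sub>R sgn w1) - norm (norm w2 *\<^sub>R (sgn w2 - sgn w1))"
    unfolding eq by (rule norm_diff_ineq)
  moreover have "norm (w1 + norm w2 *\<^sub>R sgn w1) = norm w1 + norm w2"
    using e1 False by (simp add: norm_sgn)
  moreover have "norm (norm w2 *\<^sub>R (sgn w2 - sgn w1)) \<le> norm w2 / 2"
    using mult_left_mono[OF assms, of "norm w2"] by simp
  ultimately show ?thesis by simp
qed





lemma sgn_diff_bound:
  fixes x y :: "'b::real_normed_vector"
  assumes "x \<noteq> 0"
  shows "norm (sgn y - sgn x) \<le> 2 * norm (y - x) / norm x"
proof (cases "y = 0")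
  case True
  then show ?thesis using assms by (simp add: norm_sgn)
next
  case False
  have nx: "norm x > 0" using assms by simp
  define A where "A = inverse (norm y) - inverse (norm x)"
  have eq: "sgn y - sgn x = A *\<^sub>R y + inverse (norm x) *\<^sub>R (y - x)"
    unfolding A_def by (simp add: sgn_div_norm scaleR_diff_left scaleR_diff_right)
  have 1: "norm (sgn y - sgn x) \<le> norm (A *\<^sub>R y) + norm (inverse (norm x) *\<^sub>R (y - x))"
    unfolding eq by (rule norm_triangle_ineq)
  have 2: "norm (inverse (norm x) *\<^sub>R (y - x)) = norm (y - x) / norm x"
  proof -
    have "norm (inverse (norm x) *\<^sub>R (y - x)) = inverse (norm x) * norm (y - x)" using nx by simp
    then show ?thesis by (simp add: divide_inverse_commute)
  qed
  have ny: "norm y > 0" using False by simp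
  have "A = (norm x - norm y) / (norm x * norm y)"
    unfolding A_def using nx ny by (simp add: field_simps)
  then have "\<bar>A\<bar> = \<bar>norm x - norm y\<bar> / (norm x * norm y)"
    using nx ny by (simp only: abs_divide abs_mult abs_norm_cancel)
  moreover have "\<bar>norm x - norm y\<bar> / (norm x * norm y) * norm y = \<bar>norm x - norm y\<bar> / norm x"
    using nx ny by (simp add: field_simps)
  ultimately have Ay: "norm (A *\<^sub>R y) = \<bar>norm x - norm y\<bar> / norm x" by (simp only: norm_scaleR)
  have "\<bar>norm x - norm y\<bar> \<le> norm (y - x)"
    using norm_triangle_ineq3[of y x] by linarith
  then have 3: "\<bar>norm x - norm y\<bar> / norm x \<le> norm (y - x) / norm x" using nx by (simp add: divide_right_mono)
  have "norm (sgn y - sgn x) \<le> norm (y - x) / norm x + norm (y - x) / norm x"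
    using 1 2 3 Ay by linarith
  then show ?thesis by simp
qed



lemma tri3:
  fixes a b c e :: "'b::real_normed_vector"
  shows "norm (a - e) \<le> norm (a - b) + norm (b - c) + norm (c - e)"
proof -
  have "a - e = (a - b) + ((b - c) + (c - e))" by simp
  then have "norm (a - e) \<le> norm (a - b) + norm ((b - c) + (c - e))"
    by (metis norm_triangle_ineq)
  also have "norm ((b - c) + (c - e)) \<le> norm (b - c) + norm (c - e)" by (rule norm_triangle_ineq)
  finally show ?thesis by simp
qed

lemma tri2:
  fixes a b c :: "'b::real_normed_vector"
  shows "norm (a - c) \<le> norm (a - b) + norm (b - c)"
proof -
  have "a - c = (a - b) + (b - c)" by simp
  then show ?thesis by (metis norm_triangle_ineq)
qed

lemma half_contra: "(a::real) < b / 2 \<Longrightarrow> b \<le> 2 * a \<Longrightarrow> False" by linarith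

theorem theorem1p2:
  fixes h :: "real \<Rightarrow> real" and X :: "'a set" and d :: "'a \<Rightarrow> 'a \<Rightarrow> real"
    and f :: "'a \<Rightarrow> 'b::real_normed_vector"
  assumes "snowflaking h"
    and "Metric_space X d"
    and "\<exists>B::'b set. finite B \<and> span B = UNIV"
    and "\<forall>x\<in>X. \<forall>y\<in>X. dist (f x) (f y) = h (d x y)"
  shows "finite X"
proof -
  have nn: "\<forall>t\<ge>0. h t \<ge> 0" and h0: "h 0 = 0" and conc: "concave_on {0..} h"
    and lim0: "filterlim (\<lambda>t. h t / t) at_top (at_right 0)"
    and liminf: "((\<lambda>t. h t / t) \<longlongrightarrow> 0) at_top"
    using assms(1) unfolding snowflaking_def by auto
  interpret M: Metric_space X d by (rule assms(2))
  have hmono: "h x \<le> h y" if "0 \<le> x" "x \<le> y" for x y using h_mono[OF conc nn that] .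
  have ganti: "h y / y \<le> h x / x" if "0 < x" "x \<le> y" for x y using g_anti[OF conc h0 that] .
  have hpos: "h t > 0" if tp: "t > 0" for t
  proof (rule ccontr)
    assume "\<not> h t > 0"
    moreover have "h t \<ge> 0" using nn tp by auto
    ultimately have ht: "h t = 0" by linarith
    have "eventually (\<lambda>x. 1 \<le> h x / x) (at_right 0)" by (rule filterlim_at_top[THEN iffD1, OF lim0, rule_format])
    then obtain b where b: "b > 0" "\<forall>y>0. y < b \<longrightarrow> 1 \<le> h y / y"
      unfolding eventually_at_right_field by auto
    define y where "y = min b t / 2"
    have y: "y > 0" "y < b" "y \<le> t" using b tp unfolding y_def by auto
    have "h y \<le> h t" using hmono y by auto
    moreover have "h y \<ge> 0" using nn y by auto
    ultimately have "h y = 0" using ht by auto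
    then show False using b y by auto
  qed
  have iso: "norm (f x - f y) = h (d x y)" if "x \<in> X" "y \<in> X" for x y
    using assms(4) that by (simp add: dist_norm)
  have key: "h (d b c) / d b c \<le> 2 * (h (d a b) / d a b)"
    if abc: "a \<in> X" "b \<in> X" "c \<in> X" and sp: "d a b > 0" and tp: "d b c > 0"
      and ineq: "norm (f a - f b) + norm (f b - f c) / 2 \<le> norm (f a - f c)" for a b c
  proof -
    define s where "s = d a b"
    define t where "t = d b c"
    have "h (d a c) \<le> h (s + t)"
      using hmono M.triangle[OF abc] M.nonneg unfolding s_def t_def by auto
    also have "\<dots> \<le> h s + t * (h s / s)" using h_sub[OF conc h0, of s t] sp tp s_def t_def by auto
    finally have A: "h (d a c) \<le> h s + t * (h s / s)" .
    have "h s + h t / 2 \<le> h (d a c)"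
      using ineq iso abc unfolding s_def t_def by auto
    with A have "h t \<le> 2 * (t * (h s / s))" by linarith
    then have "h t \<le> (2 * (h s / s)) * t" by (simp add: mult_ac)
    then show ?thesis using tp unfolding s_def[symmetric] t_def[symmetric] by (simp add: pos_divide_le_eq)
  qed
  have dpos: "d x y > 0" if "x \<in> X" "y \<in> X" "x \<noteq> y" for x y
    using M.zero[OF that(1,2)] M.nonneg[of x y] that(3) by linarith
  have injf: "inj_on f X"
  proof (rule inj_onI)
    fix x y assume xy: "x \<in> X" "y \<in> X" "f x = f y"
    show "x = y"
    proof (rule ccontr)
      assume "x \<noteq> y"
      then have "h (d x y) > 0" using hpos dpos xy by auto
      then show False using iso[of x y] xy by simp
    qed
  qed
  show "finite X"
  proof (rule ccontr)
    assume inf: "infinite X"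
    show False
    proof (cases "bounded (f ` X)")
      case True
      obtain xs :: "nat \<Rightarrow> 'a" where xs: "inj xs" "range xs \<subseteq> X"
        using infinite_countable_subset[OF inf] by blast
      have bY: "bounded (range (f \<circ> xs))"
        by (rule bounded_subset[OF True]) (use xs in auto)
      obtain p r where r: "strict_mono r" "((f \<circ> xs) \<circ> r) \<longlonglongrightarrow> p"
        using bw[OF assms(3) bY] by blast
      define y where "y n = f (xs (r n))" for n
      have ylim: "y \<longlonglongrightarrow> p" using r(2) unfolding y_def by (simp add: o_def)
      have yinj: "i = j" if "y i = y j" for i j
      proof -
        have "xs (r i) = xs (r j)" using injf xs that unfolding y_def by (meson inj_onD range_subsetD)
        then have "r i = r j" using xs(1) by (simp add: inj_eq)
        then show ?thesis using strict_mono_eq[OF r(1)] by simp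
      qed
      obtain N where N: "\<forall>n\<ge>N. y n \<noteq> p"
      proof (cases "\<exists>n0. y n0 = p")
        case True
        then obtain n0 where "y n0 = p" by blast
        then have "\<forall>n\<ge>Suc n0. y n \<noteq> p" using yinj by force
        then show ?thesis using that by blast
      next
        case False then show ?thesis using that by blast
      qed
      define z where "z n = y (n + N)" for n
      have zlim: "z \<longlonglongrightarrow> p" unfolding z_def using LIMSEQ_ignore_initial_segment[OF ylim, of N] .
      have zp: "z n \<noteq> p" for n using N unfolding z_def by auto
      define v where "v n = sgn (z n - p)" for n
      have "bounded (range v)" unfolding bounded_iff v_def
        by (intro exI[of _ 1]) (auto simp: norm_sgn)
      then obtain u r2 where r2: "strict_mono r2" "(v \<circ> r2) \<longlonglongrightarrow> u"
        using bw[OF assms(3)] by blast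
      define q where "q n = xs (r (r2 n + N))" for n
      define w where "w n = f (q n)" for n
      define \<rho> where "\<rho> n = norm (w n - p)" for n
      have wz: "w n = z (r2 n)" for n unfolding w_def q_def z_def y_def by simp
      have qX: "q n \<in> X" for n using xs unfolding q_def by auto
      have qinj: "q i \<noteq> q j" if "i \<noteq> j" for i j
      proof
        assume "q i = q j"
        then have "w i = w j" unfolding w_def by simp
        then have "r2 i + N = r2 j + N" using yinj unfolding wz z_def by blast
        then show False using strict_mono_eq[OF r2(1)] that by simp
      qed
      have \<rho>pos: "\<rho> n > 0" for n unfolding \<rho>_def wz using zp by simp
      have wlim: "w \<longlonglongrightarrow> p" unfolding wz using LIMSEQ_subseq_LIMSEQ[OF zlim r2(1)] by (simp add: o_def)
      have \<rho>lim: "\<rho> \<longlonglongrightarrow> 0"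
        unfolding \<rho>_def using tendsto_norm[OF tendsto_diff[OF wlim tendsto_const[of p]]] by simp
      have \<rho>small: "\<exists>J. \<forall>j\<ge>J. \<rho> j < e" if "e > 0" for e
        using \<rho>lim that \<rho>pos unfolding LIMSEQ_iff by (metis diff_zero real_norm_def abs_of_pos)
      have vlim: "(\<lambda>n. sgn (w n - p)) \<longlonglongrightarrow> u" using r2(2) unfolding wz v_def by (simp add: o_def)
      obtain n where n: "\<forall>j\<ge>n. norm (sgn (w j - p) - u) < 1/16"
        using vlim unfolding LIMSEQ_iff by (meson zero_less_divide_1_iff zero_less_numeral)
      obtain J where J: "\<forall>j\<ge>J. \<rho> j < \<rho> n / 4" using \<rho>small[of "\<rho> n / 4"] \<rho>pos[of n] by auto
      define s0 where "s0 = d (q J) (q (Suc J))"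
      have s0pos: "s0 > 0" unfolding s0_def using dpos qX qinj by auto
      have "h s0 = norm (w J - w (Suc J))" unfolding s0_def w_def using iso qX by simp
      also have "\<dots> \<le> norm (w J - p) + norm (p - w (Suc J))" by (rule tri2)
      also have "\<dots> = \<rho> J + \<rho> (Suc J)" unfolding \<rho>_def by (simp add: norm_minus_commute)
      finally have "h s0 \<le> \<rho> J + \<rho> (Suc J)" .
      moreover have "\<rho> J < \<rho> n / 4" "\<rho> (Suc J) < \<rho> n / 4" using J by auto
      ultimately have hs0: "h s0 < \<rho> n / 2" by linarith
      define G where "G = h s0 / s0"
      have "eventually (\<lambda>x. 2 * G + 1 \<le> h x / x) (at_right 0)" by (rule filterlim_at_top[THEN iffD1, OF lim0, rule_format])
      then obtain \<eta> where eta: "\<eta> > 0" "\<forall>t>0. t < \<eta> \<longrightarrow> 2 * G + 1 \<le> h t / t"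
        unfolding eventually_at_right_field by auto
      have heta: "h \<eta> > 0" using hpos eta by auto
      obtain J2 where J2: "\<forall>j\<ge>J2. \<rho> j < min (\<rho> n / 16) (h \<eta> / 2)"
        using \<rho>small[of "min (\<rho> n / 16) (h \<eta> / 2)"] \<rho>pos[of n] heta by auto
      define m where "m = max (Suc n) J2"
      have m: "m > n" "\<rho> m < \<rho> n / 16" "\<rho> m < h \<eta> / 2" using J2 unfolding m_def by auto
      obtain J3 where J3: "\<forall>j\<ge>J3. \<rho> j < \<rho> m / 16" using \<rho>small[of "\<rho> m / 16"] \<rho>pos[of m] by auto
      define k where "k = max (Suc m) J3"
      have k: "k > m" "\<rho> k < \<rho> m / 16" using J3 unfolding k_def by auto
      have wp: "w j - p \<noteq> 0" for j using \<rho>pos[of j] unfolding \<rho>_def by auto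
      have g1: "norm (sgn (w n - w m) - sgn (w n - p)) < 1/8"
      proof -
        have "norm (sgn (w n - w m) - sgn (w n - p)) \<le> 2 * norm ((w n - w m) - (w n - p)) / norm (w n - p)"
          by (rule sgn_diff_bound[OF wp])
        also have "\<dots> = 2 * \<rho> m / \<rho> n" unfolding \<rho>_def by (simp add: norm_minus_commute)
        also have "\<dots> < 1/8" using m \<rho>pos[of n] by (simp add: field_simps)
        finally show ?thesis .
      qed
      have g2: "norm (sgn (w m - w k) - sgn (w m - p)) < 1/8"
      proof -
        have "norm (sgn (w m - w k) - sgn (w m - p)) \<le> 2 * norm ((w m - w k) - (w m - p)) / norm (w m - p)"
          by (rule sgn_diff_bound[OF wp])
        also have "\<dots> = 2 * \<rho> k / \<rho> m" unfolding \<rho>_def by (simp add: norm_minus_commute)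
        also have "\<dots> < 1/8" using k \<rho>pos[of m] by (simp add: field_simps)
        finally show ?thesis .
      qed
      have g3: "norm (sgn (w m - p) - sgn (w n - p)) < 1/8"
      proof -
        have "norm (sgn (w m - p) - sgn (w n - p)) \<le> norm (sgn (w m - p) - u) + norm (u - sgn (w n - p))"
          by (rule tri2)
        then show ?thesis using n m(1) by (simp add: norm_minus_commute) (smt (verit) less_imp_le order_refl)
      qed
      have "norm (sgn (w m - w k) - sgn (w n - w m)) \<le>
          norm (sgn (w m - w k) - sgn (w m - p)) + norm (sgn (w m - p) - sgn (w n - p)) + norm (sgn (w n - p) - sgn (w n - w m))"
        by (rule tri3)
      then have "norm (sgn (w m - w k) - sgn (w n - w m)) \<le> 1/2"
        using g1 g2 g3 by (simp add: norm_minus_commute)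
      then have geo: "norm (w n - w m) + norm (w m - w k) / 2 \<le> norm (w n - w k)"
        using key_geom[of "w m - w k" "w n - w m"] by simp
      have nm: "n \<noteq> m" "m \<noteq> k" using m k by auto
      have sp: "d (q n) (q m) > 0" "d (q m) (q k) > 0" using dpos qX qinj nm by auto
      have kk: "h (d (q m) (q k)) / d (q m) (q k) \<le> 2 * (h (d (q n) (q m)) / d (q n) (q m))"
        using key[OF qX qX qX sp] geo unfolding w_def by simp
      define s where "s = d (q n) (q m)"
      define t where "t = d (q m) (q k)"
      have hs: "h s = norm (w n - w m)" unfolding s_def w_def using iso qX by simp
      have ht: "h t = norm (w m - w k)" unfolding t_def w_def using iso qX by simp
      have "\<rho> n \<le> norm (w n - w m) + \<rho> m" unfolding \<rho>_def using tri2[where a="w n" and b="w m" and c=p]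
        by (metis norm_minus_commute tri2)
      then have "h s > h s0" using hs hs0 m \<rho>pos[of m] by linarith
      then have "s > s0" using hmono[of s s0] s0pos sp unfolding s_def by force
      then have gs: "h s / s \<le> G" unfolding G_def using ganti s0pos by simp
      have "norm (w m - w k) \<le> \<rho> m + \<rho> k" unfolding \<rho>_def
        using tri2[where a="w m" and b=p and c="w k"] norm_minus_commute[of p "w k"] by linarith
      then have "h t < h \<eta>" using ht m k \<rho>pos[of m] by linarith
      then have "t < \<eta>" using hmono[of \<eta> t] eta by force
      then have "2 * G + 1 \<le> h t / t" using eta sp unfolding t_def by auto
      then show False using kk gs unfolding s_def[symmetric] t_def[symmetric] by linarith
    next
      case False
      obtain x0 where x0: "x0 \<in> X" using inf by (metis finite.emptyI ex_in_conv)
      define p where "p = f x0"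
      have far: "\<exists>x\<in>X. real j < norm (f x - p)" for j :: nat
      proof (rule ccontr)
        assume "\<not> ?thesis"
        then have "\<forall>x\<in>X. norm (f x - p) \<le> real j" by auto
        then have "\<forall>x\<in>X. norm (f x) \<le> norm p + real j"
          by (metis add.commute add_le_cancel_left norm_triangle_sub order_trans)
        then have "bounded (f ` X)" unfolding bounded_iff by auto
        then show False using False by simp
      qed
      then obtain xs where xs: "\<forall>j. xs j \<in> X \<and> real j < norm (f (xs j) - p)" by metis
      define v where "v j = sgn (f (xs j) - p)" for j
      have "bounded (range v)" unfolding bounded_iff v_def
        by (intro exI[of _ 1]) (auto simp: norm_sgn)
      then obtain u r where r: "strict_mono r" "(v \<circ> r) \<longlonglongrightarrow> u"
        using bw[OF assms(3)] by blast
      define q where "q j = xs (r j)" for j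
      define w where "w j = f (q j)" for j
      define \<rho> where "\<rho> j = norm (w j - p)" for j
      have qX: "q j \<in> X" for j using xs unfolding q_def by auto
      have \<rho>big: "\<rho> j > real j" for j
      proof -
        have "real j \<le> real (r j)" using seq_suble[OF r(1)] by simp
        then show ?thesis using xs unfolding \<rho>_def w_def q_def by (meson le_less_trans)
      qed
      have vlim: "(\<lambda>j. sgn (w j - p)) \<longlonglongrightarrow> u" using r(2) unfolding w_def q_def v_def by (simp add: o_def)
      obtain n0 where n0: "\<forall>j\<ge>n0. norm (sgn (w j - p) - u) < 1/16"
        using vlim unfolding LIMSEQ_iff by (meson zero_less_divide_1_iff zero_less_numeral)
      define m where "m = Suc n0"
      have \<rho>m: "\<rho> m > 0" using \<rho>big[of m] unfolding m_def by simp
      have wp: "w j - p \<noteq> 0" if "j > 0" for j using \<rho>big[of j] that unfolding \<rho>_def by auto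
      have "q m \<noteq> x0" using \<rho>m unfolding \<rho>_def w_def p_def by auto
      then have tp: "d (q m) x0 > 0" using dpos qX x0 by auto
      define t where "t = d (q m) x0"
      have gt: "h t / t > 0" using hpos tp unfolding t_def by simp
      have "eventually (\<lambda>s. h s / s < h t / t / 2) at_top"
        using order_tendstoD(2)[OF liminf] gt by simp
      then obtain S where S: "\<forall>s\<ge>S. h s / s < h t / t / 2" unfolding eventually_at_top_linorder by auto
      define S' where "S' = max S 0"
      have hS': "h S' \<ge> 0" using nn unfolding S'_def by simp
      define n where "n = max (Suc m) (nat \<lceil>16 * \<rho> m + h S'\<rceil>)"
      have "real n \<ge> 16 * \<rho> m + h S'" unfolding n_def by linarith
      then have \<rho>n: "\<rho> n > 16 * \<rho> m + h S'" using \<rho>big[of n] by linarith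
      have nm: "n > m" unfolding n_def by simp
      have g1: "norm (sgn (w n - w m) - sgn (w n - p)) < 1/8"
      proof -
        have "norm (sgn (w n - w m) - sgn (w n - p)) \<le> 2 * norm ((w n - w m) - (w n - p)) / norm (w n - p)"
          by (rule sgn_diff_bound[OF wp]) (use nm in simp)
        also have "\<dots> = 2 * \<rho> m / \<rho> n" unfolding \<rho>_def by (simp add: norm_minus_commute)
        also have "\<dots> < 1/8" using \<rho>n \<rho>m hS' by (simp add: field_simps)
        finally show ?thesis .
      qed
      have g3: "norm (sgn (w m - p) - sgn (w n - p)) < 1/8"
      proof -
        have "norm (sgn (w m - p) - sgn (w n - p)) \<le> norm (sgn (w m - p) - u) + norm (u - sgn (w n - p))"
          by (rule tri2)
        moreover have "norm (sgn (w m - p) - u) < 1/16" using n0 unfolding m_def by simp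
        moreover have "norm (u - sgn (w n - p)) < 1/16" using n0 nm unfolding m_def
          by (simp add: norm_minus_commute)
        ultimately show ?thesis by linarith
      qed
      have "norm (sgn (w m - p) - sgn (w n - w m)) \<le> norm (sgn (w m - p) - sgn (w n - p)) + norm (sgn (w n - p) - sgn (w n - w m))"
        by (rule tri2)
      then have "norm (sgn (w m - p) - sgn (w n - w m)) \<le> 1/2"
        using g1 g3 by (simp add: norm_minus_commute)
      then have geo: "norm (w n - w m) + norm (w m - p) / 2 \<le> norm (w n - p)"
        using key_geom[of "w m - p" "w n - w m"] by simp
      define s where "s = d (q n) (q m)"
      have hs: "h s = norm (w n - w m)" unfolding s_def w_def using iso qX by simp
      have "\<rho> n \<le> norm (w n - w m) + \<rho> m" unfolding \<rho>_def
        using tri2[where a="w n" and b="w m" and c=p] by simp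
      then have hsS: "h s > h S'" using hs \<rho>n \<rho>m by linarith
      then have sS: "s > S'" using hmono[of s S'] M.nonneg unfolding s_def S'_def by force
      then have sp: "s > 0" unfolding S'_def by simp
      have kk: "h t / t \<le> 2 * (h s / s)"
        using key[OF qX qX x0 _ tp] sp geo unfolding w_def s_def t_def p_def by simp
      have "h s / s < h t / t / 2" using S sS unfolding S'_def by simp
      then show False using kk half_contra by blast
    qed
  qed
qed


end
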